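(* For every $n\in\mathbb{N}$: \begin{align*} \sum_{j=0}^{n}\sum_{i=0}^{j}\frac{\binom{2n+2}{i}}{\binom{2n+1}{j}}&=(n+1)\sum_{k=0}^{n}\frac{1}{2k+1}=(n+1)\Big(H_{2n+1}-\frac{H_n}{2}\Big),\\ \sum_{j=0}^{n}\sum_{i=0}^{j}\frac{\binom{2n+3}{i}}{\binom{2n+1}{j}}&=(n+1)H_{n+1},\\ \sum_{j=0}^{n}\sum_{i=0}^{j}\frac{\binom{2n+1}{i}}{\binom{2n}{j}}&=\frac{2^{2n-1}}{\binom{2n}{n}}+\Big(n+\frac12\Big)\Big(H_{2n+1}-\frac{H_n}{2}\Big),\\ \sum_{j=0}^{n}\sum_{i=0}^{j}\frac{\binom{2n+2}{i}}{\binom{2n}{j}}&=\frac{2^{2n}}{\binom{2n}{n}}+\Big(n+\frac12\Big)H_n. \end{align*}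
   Context: $H_n=\sum_{k=1}^{n}\frac1k$ is the $n$-th harmonic number ($H_0=0$). *)

theory Defs
  imports "HOL-Analysis.Analysis"
begin

end

theory Submission
  imports Defs
begin

definition Bs :: "nat \<Rightarrow> nat \<Rightarrow> real" where
  "Bs m j = (\<Sum>i=0..j. real (m choose i))"

definition xx :: "nat \<Rightarrow> nat \<Rightarrow> real" where
  "xx m j = Bs m j / real (m choose j)"

definition XX :: "nat \<Rightarrow> nat \<Rightarrow> real" where
  "XX m N = (\<Sum>j=0..N. xx m j)"

definition Od :: "nat \<Rightarrow> real" where
  "Od n = (\<Sum>k=0..n. 1 / real (2*k+1))"

lemma Bs_Suc: "Bs m (Suc j) = Bs m j + real (m choose Suc j)"
  by (simp add: Bs_def)

lemma L1: "Bs (Suc m) j = 2 * Bs m j - real (m choose j)"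
proof (induction j)
  case 0 then show ?case by (simp add: Bs_def)
next
  case (Suc j) then show ?case by (simp add: Bs_Suc)
qed

lemma choose_rel1:
  assumes "j < m"
  shows "real (m choose Suc j) * real (Suc j) = real (m choose j) * (real m - real j)"
proof -
  have "(m - j) * (m choose j) = m * ((m - 1) choose j)" by (rule binomial_absorb_comp)
  moreover have "m * ((m - 1) choose j) = (m choose Suc j) * Suc j"
    using Suc_times_binomial_eq[of "m-1" j] assms by simp
  ultimately have "(m choose Suc j) * Suc j = (m choose j) * (m - j)" by (simp add: mult.commute)
  then have e: "real (m choose Suc j) * real (Suc j) = real (m choose j) * real (m - j)" by (metis of_nat_mult)
  have "real (m - j) = real m - real j" using assms by simp
  with e show ?thesis by simp
qed

lemma choose_rel2:
  assumes "j \<le> m"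
  shows "real (Suc m choose j) * (real m + 1 - real j) = (real m + 1) * real (m choose j)"
proof -
  have "(Suc m - j) * (Suc m choose j) = Suc m * (m choose j)"
    using binomial_absorb_comp[of "Suc m" j] by simp
  then have e: "real (Suc m - j) * real (Suc m choose j) = real (Suc m) * real (m choose j)" by (metis of_nat_mult)
  have "real (Suc m - j) = real m + 1 - real j" using assms by simp
  with e show ?thesis by (simp add: mult.commute)
qed

lemma choose_pos: "j \<le> m \<Longrightarrow> real (m choose j) > 0" by simp

lemma L2:
  assumes "j < m"
  shows "(real m - real j) * xx m (Suc j) = real (Suc j) * xx m j + (real m - real j)"
proof -
  have p1: "real (m choose j) > 0" using assms by simp
  have p2: "real (m choose Suc j) > 0" using assms by simp
  have r: "real (m choose Suc j) * real (Suc j) = real (m choose j) * (real m - real j)"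
    by (rule choose_rel1[OF assms])
  have q: "(real m - real j) / real (m choose Suc j) = real (Suc j) / real (m choose j)"
    using p1 p2 r by (simp add: divide_eq_eq eq_divide_eq mult.commute)
  have "(real m - real j) * xx m (Suc j) = (real m - real j) / real (m choose Suc j) * Bs m j + (real m - real j)"
    using p2 by (simp add: xx_def Bs_Suc field_simps)
  also have "\<dots> = real (Suc j) * Bs m j / real (m choose j) + (real m - real j)"
    by (simp add: q)
  finally show ?thesis by (simp add: xx_def)
qed
lemma xx0: "xx m 0 = 1" by (simp add: xx_def Bs_def)

lemma L3:
  "N \<le> m \<Longrightarrow> (\<Sum>j=0..N. (real m - 2*real j) * xx m j)
     = (\<Sum>j<N. real m - real j) + real m + 1 - real (Suc N) * xx m N"
proof (induction N)
  case 0 then show ?case by (simp add: xx0)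
next
  case (Suc N)
  then have N: "N < m" by simp
  have IH: "(\<Sum>j=0..N. (real m - 2*real j) * xx m j)
     = (\<Sum>j<N. real m - real j) + real m + 1 - real (Suc N) * xx m N" using Suc by simp
  have r: "(real m - real N) * xx m (Suc N) = real (Suc N) * xx m N + (real m - real N)"
    by (rule L2[OF N])
  show ?case using IH r by (simp add: algebra_simps)
qed

lemma L4:
  assumes "j \<le> m"
  shows "xx (Suc m) j = (real m + 1 - real j) / (real m + 1) * (2 * xx m j - 1)"
proof -
  have p0: "real (m choose j) > 0" using assms by simp
  have p1: "real (Suc m choose j) > 0" using assms by simp
  have r: "real (Suc m choose j) * (real m + 1 - real j) = (real m + 1) * real (m choose j)"
    by (rule choose_rel2[OF assms])
  have q: "1 / real (Suc m choose j) = (real m + 1 - real j) / ((real m + 1) * real (m choose j))"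
  proof -
    have "(real m + 1) * real (m choose j) \<noteq> 0" using p0 by simp
    then show ?thesis using p0 p1 r by (simp add: field_simps)
  qed
  have "xx (Suc m) j = (2 * Bs m j - real (m choose j)) * (1 / real (Suc m choose j))"
    by (simp add: xx_def L1)
  also have "\<dots> = (real m + 1 - real j) / (real m + 1) * (2 * xx m j - 1)"
    unfolding q using p0 by (simp add: xx_def field_simps)
  finally show ?thesis .
qed

lemma sumA: "(\<Sum>j=0..N. real m + 1 - real j) = (\<Sum>j<N. real m - real j) + real m + 1"
  by (induction N) (simp_all add: algebra_simps)

lemma L5:
  assumes "N \<le> m"
  shows "(real m + 1) * XX (Suc m) N = (real m + 2) * XX m N - real (Suc N) * xx m N"
proof -
  have "(real m + 1) * XX (Suc m) N = (\<Sum>j=0..N. (real m + 1 - real j) * (2 * xx m j - 1))"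
    unfolding XX_def sum_distrib_left
    by (rule sum.cong) (use assms in \<open>auto simp: L4\<close>)
  also have "\<dots> = (\<Sum>j=0..N. (real m - 2*real j) * xx m j + (real m + 2) * xx m j - (real m + 1 - real j))"
    by (rule sum.cong) (auto simp: algebra_simps)
  also have "\<dots> = (\<Sum>j=0..N. (real m - 2*real j) * xx m j) + (real m + 2) * XX m N - (\<Sum>j=0..N. real m + 1 - real j)"
    by (simp add: sum.distrib sum_subtractf XX_def sum_distrib_left)
  also have "\<dots> = (real m + 2) * XX m N - real (Suc N) * xx m N"
    using L3[OF assms] sumA[where N=N and m=m] by simp
  finally show ?thesis .
qed

lemma Bs_SS: "Bs (Suc (Suc m)) (Suc j) = 4 * Bs m j + real (m choose Suc j) - real (m choose j)"
  by (simp add: L1 Bs_Suc algebra_simps)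

lemma sym_mid: "(2*n+1) choose (n+1) = (2*n+1) choose n"
  using binomial_symmetric[of "n+1" "2*n+1"] by simp

lemma L6: "Bs (2*n+1) n = 4^n"
proof (induction n)
  case 0 then show ?case by (simp add: Bs_def)
next
  case (Suc n)
  have "Bs (2*Suc n+1) (Suc n) = Bs (Suc (Suc (2*n+1))) (Suc n)" by simp
  also have "\<dots> = 4 * Bs (2*n+1) n" unfolding Bs_SS using sym_mid[of n] by simp
  finally show ?case using Suc by simp
qed

lemma c1: "Bs (2*n+1) (n+1) = 4^n + real ((2*n+1) choose (n+1))"
  using Bs_Suc[of "2*n+1" n] L6[of n] by simp

lemma c2: "Bs (2*n+2) (n+1) = 2*4^n + real ((2*n+1) choose (n+1))"
  using L1[of "2*n+1" "n+1"] c1[of n] by simp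

lemma c3: "real ((2*n+2) choose (n+1)) = 2 * real ((2*n+1) choose (n+1))"
proof -
  have "(2*n+2) choose (n+1) = ((2*n+1) choose n) + ((2*n+1) choose (n+1))"
    by simp
  then show ?thesis using sym_mid[of n] by simp
qed

lemma c4: "Bs (2*n) n = (4^n + real ((2*n) choose n)) / 2"
  using L1[of "2*n" n] L6[of n] by simp

lemma x1: "xx (2*n+1) (n+1) = 4^n / real ((2*n+1) choose (n+1)) + 1"
proof -
  have "real ((2*n+1) choose (n+1)) > 0" by (simp del: binomial_Suc_Suc)
  then show ?thesis unfolding xx_def c1 by (simp add: field_simps del: binomial_Suc_Suc)
qed

lemma x2: "xx (2*n+2) (n+1) = 4^n / real ((2*n+1) choose (n+1)) + 1/2"
proof -
  have "real ((2*n+1) choose (n+1)) > 0" by (simp del: binomial_Suc_Suc)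
  then show ?thesis unfolding xx_def c2 c3 by (simp add: field_simps del: binomial_Suc_Suc)
qed

lemma x3: "xx (2*n) n = 4^n / real ((2*n) choose n) / 2 + 1/2"
proof -
  have "real ((2*n) choose n) > 0" by simp
  then show ?thesis unfolding xx_def c4 by (simp add: field_simps)
qed

lemma Od_Suc: "Od (Suc n) = Od n + 1 / (2 * real n + 3)"
  by (simp add: Od_def add.commute)

lemma algO:
  fixes a y z t w q r n sv :: real
  assumes n: "n \<ge> 0"
    and h1: "(2*n+2) * y = (2*n+3) * w - (n+2) * q" and h2: "w = a + q"
    and h3: "(2*n+3) * z = (2*n+4) * y - (n+2) * r"
    and h4: "a = (n+1)/2*(1+sv)" and h5: "q = t+1" and h6: "r = t+1/2"
  shows "z = (n+2)/2*(1+(sv+1/(2*n+3)))"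
proof -
  have "(2*n+2) * y = (2*n+3)*a + (n+1)*(t+1)" using h1 h2 h5 by (simp add: algebra_simps)
  then have "(2*n+2) * y = (2*n+2) * ((2*n+3)*(1+sv)/4 + (t+1)/2)" using h4 by (simp add: field_simps)
  moreover have "2*n+2 \<noteq> 0" using n by simp
  ultimately have y: "y = (2*n+3)*(1+sv)/4 + (t+1)/2" by simp
  have "(2*n+3) * z = (2*n+4)*((2*n+3)*(1+sv)/4 + (t+1)/2) - (n+2)*(t+1/2)" using h3 y h6 by simp
  also have "\<dots> = (n+2)*((2*n+3)*(1+sv)+1)/2" by (simp add: field_simps)
  finally have "(2*n+3) * z = (n+2)*((2*n+3)*(1+sv)+1)/2" .
  moreover have "(2*n+3) * ((n+2)/2*(1+(sv+1/(2*n+3)))) = (n+2)*((2*n+3)*(1+sv)+1)/2"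
    using n by (simp add: field_simps)
  moreover have "2*n+3 \<noteq> 0" using n by simp
  ultimately show ?thesis by (metis mult_left_cancel)
qed

lemma Xodd: "XX (2*n+1) n = (real n + 1) / 2 * (1 + Od n)"
proof (induction n)
  case 0 then show ?case by (simp add: XX_def xx0 Od_def)
next
  case (Suc n)
  define t where "t = 4^n / real ((2*n+1) choose (n+1))"
  have e1: "(2*real n+2) * XX (2*n+2) (n+1) = (2*real n+3) * XX (2*n+1) (n+1) - (real n+2) * xx (2*n+1) (n+1)"
    using L5[of "n+1" "2*n+1"] by (simp add: algebra_simps)
  have e2: "XX (2*n+1) (n+1) = XX (2*n+1) n + xx (2*n+1) (n+1)"
    by (simp add: XX_def)
  have e3: "(2*real n+3) * XX (2*n+3) (n+1) = (2*real n+4) * XX (2*n+2) (n+1) - (real n+2) * xx (2*n+2) (n+1)"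
    using L5[of "n+1" "2*n+2"] by (simp add: numeral_3_eq_3 algebra_simps)
  have z: "XX (2*n+3) (n+1) = (real n+2)/2*(1+(Od n+1/(2*real n+3)))"
    by (rule algO[OF _ e1 e2 e3 Suc x1[of n, folded t_def] x2[of n, folded t_def]]) simp
  have "XX (2*Suc n+1) (Suc n) = XX (2*n+3) (n+1)" by (simp add: eval_nat_numeral)
  then show ?case using z by (simp add: Od_Suc algebra_simps)
qed

lemma Xeven: "XX (2*n) n = 4^n / real ((2*n) choose n) / 4 + (real n + 1) / 2 + (2*real n + 1) / 4 * Od n"
proof -
  define c where "c = 4^n / real ((2*n) choose n)"
  have e: "(2*real n+1) * XX (2*n+1) n = (2*real n+2) * XX (2*n) n - (real n+1) * xx (2*n) n"
    using L5[of n "2*n"] by (simp add: algebra_simps)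
  have x: "xx (2*n) n = c/2 + 1/2" using x3[of n] by (simp add: c_def)
  have o: "XX (2*n+1) n = (real n + 1) / 2 * (1 + Od n)" by (rule Xodd)
  have "(2*real n+2) * XX (2*n) n = (2*real n+1) * XX (2*n+1) n + (real n+1) * xx (2*n) n"
    using e by simp
  also have "\<dots> = (2*real n+1) * ((real n + 1) / 2 * (1 + Od n)) + (real n+1) * (c/2 + 1/2)"
    unfolding x o ..
  also have "\<dots> = (2*real n+2) * (c/4 + (real n + 1) / 2 + (2*real n + 1) / 4 * Od n)"
    by (simp add: field_simps)
  finally have "(2*real n+2) * XX (2*n) n = (2*real n+2) * (c/4 + (real n + 1) / 2 + (2*real n + 1) / 4 * Od n)" .
  moreover have "2*real n+2 \<noteq> 0" by simp
  ultimately show ?thesis by (simp add: c_def)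
qed

lemma HO: "harm (2*n+1) = Od n + harm n / (2::real)"
proof (induction n)
  case 0 then show ?case by (simp add: Od_def harm_def)
next
  case (Suc n)
  have h1: "harm (2*Suc n+1) = harm (2*n+1) + 1/(2*real n+2) + 1/(2*real n+3 :: real)"
    by (simp add: eval_nat_numeral harm_Suc field_simps)
  have h2: "harm (Suc n) = harm n + 1/(real n + 1 :: real)" by (simp add: harm_Suc field_simps)
  have h: "1/(2*real n+2) = 1/(real n+1)/2" by (simp add: field_simps)
  have A: "harm (2*Suc n+1) = Od n + harm n/2 + 1/(2*real n+2) + 1/(2*real n+3 :: real)"
    using h1 Suc.IH by simp
  have B: "Od (Suc n) + harm (Suc n)/2 = Od n + harm n/2 + 1/(2*real n+2) + 1/(2*real n+3 :: real)"
    unfolding Od_Suc h2 h by (simp add: add_divide_distrib)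
  show ?case using A B by linarith
qed

lemma HR: "n < M \<Longrightarrow> (\<Sum>j=0..n. 1 / real (M - j)) = harm M - (harm (M - Suc n) :: real)"
proof (induction n)
  case 0
  then obtain k where "M = Suc k" by (cases M) auto
  then show ?case by (simp add: harm_Suc field_simps)
next
  case (Suc n)
  then obtain k where k: "M - Suc n = Suc k" by (cases "M - Suc n") auto
  then have kk: "M - Suc (Suc n) = k" by simp
  have IH: "(\<Sum>j=0..n. 1 / real (M - j)) = harm M - (harm (Suc k) :: real)"
    using Suc k by simp
  have "(\<Sum>j=0..Suc n. 1 / real (M - j)) = (\<Sum>j=0..n. 1 / real (M - j)) + 1 / real (Suc k)"
    using k by simp
  also have "\<dots> = harm M - harm k" unfolding IH harm_Suc by (simp add: divide_inverse)
  finally show ?case using kk by simp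
qed

lemma T1: "j \<le> m \<Longrightarrow> Bs (Suc m) j / real (m choose j) = 2 * xx m j - 1"
proof -
  assume "j \<le> m"
  then have "real (m choose j) > 0" by simp
  then show ?thesis by (simp add: L1 xx_def field_simps)
qed

lemma T2: "j \<le> m \<Longrightarrow> Bs (Suc (Suc m)) j / real (m choose j) = 4 * xx m j - 2 - (real m + 1) / real (Suc m - j)"
proof -
  assume a: "j \<le> m"
  then have p: "real (m choose j) > 0" by simp
  have r: "real (Suc m choose j) * (real m + 1 - real j) = (real m + 1) * real (m choose j)"
    by (rule choose_rel2[OF a])
  have d: "real (Suc m - j) = real m + 1 - real j" using a by simp
  have q: "real (Suc m choose j) / real (m choose j) = (real m + 1) / real (Suc m - j)"
    unfolding d using p r a by (simp add: field_simps)
  have "Bs (Suc (Suc m)) j / real (m choose j) = (4 * Bs m j - 2 * real (m choose j) - real (Suc m choose j)) / real (m choose j)"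
    by (simp add: L1[of "Suc m"] L1[of m] algebra_simps)
  also have "\<dots> = 4 * xx m j - 2 - real (Suc m choose j) / real (m choose j)"
    using p by (simp add: xx_def field_simps)
  finally show ?thesis using q by simp
qed

lemma DS: "(\<Sum>j=0..n. \<Sum>i=0..j. real (a choose i) / real (m choose j)) = (\<Sum>j=0..n. Bs a j / real (m choose j))"
  by (simp add: Bs_def sum_divide_distrib)

lemma S1: "n \<le> m \<Longrightarrow> (\<Sum>j=0..n. Bs (Suc m) j / real (m choose j)) = 2 * XX m n - (real n + 1)"
proof -
  assume a: "n \<le> m"
  have "(\<Sum>j=0..n. Bs (Suc m) j / real (m choose j)) = (\<Sum>j=0..n. 2 * xx m j - 1)"
    by (rule sum.cong) (use a in \<open>auto simp: T1\<close>)
  then show ?thesis by (simp add: sum_subtractf XX_def sum_distrib_left)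
qed

lemma S2: "n \<le> m \<Longrightarrow> (\<Sum>j=0..n. Bs (Suc (Suc m)) j / real (m choose j))
   = 4 * XX m n - 2 * (real n + 1) - (real m + 1) * (harm (Suc m) - harm (Suc m - Suc n))"
proof -
  assume a: "n \<le> m"
  have "(\<Sum>j=0..n. Bs (Suc (Suc m)) j / real (m choose j)) = (\<Sum>j=0..n. 4 * xx m j - 2 - (real m + 1) * (1 / real (Suc m - j)))"
    by (rule sum.cong) (use a in \<open>auto simp: T2\<close>)
  also have "\<dots> = 4 * XX m n - 2 * (real n + 1) - (real m + 1) * (\<Sum>j=0..n. 1 / real (Suc m - j))"
    by (simp add: sum_subtractf XX_def sum_distrib_left)
  also have "(\<Sum>j=0..n. 1 / real (Suc m - j)) = harm (Suc m) - harm (Suc m - Suc n)"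
    using a by (intro HR) simp
  finally show ?thesis .
qed

theorem corollary2:
  fixes n :: nat
  shows "((\<Sum>j=0..n. \<Sum>i=0..j. real ((2*n+2) choose i) / real ((2*n+1) choose j))
           = real (n+1) * (\<Sum>k=0..n. 1 / real (2*k+1))
       \<and> real (n+1) * (\<Sum>k=0..n. 1 / real (2*k+1))
           = real (n+1) * (harm (2*n+1) - harm n / 2))
     \<and> ((\<Sum>j=0..n. \<Sum>i=0..j. real ((2*n+3) choose i) / real ((2*n+1) choose j))
           = real (n+1) * harm (n+1))
     \<and> ((\<Sum>j=0..n. \<Sum>i=0..j. real ((2*n+1) choose i) / real ((2*n) choose j))
           = (2::real)^(2*n) / 2 / real ((2*n) choose n)
             + (real n + 1/2) * (harm (2*n+1) - harm n / 2))
     \<and> ((\<Sum>j=0..n. \<Sum>i=0..j. real ((2*n+2) choose i) / real ((2*n) choose j))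
           = (2::real)^(2*n) / real ((2*n) choose n) + (real n + 1/2) * harm n)"
proof -
  define O1 where "O1 = Od n"
  define X1 where "X1 = XX (2*n+1) n"
  define X0 where "X0 = XX (2*n) n"
  define c where "c = 4^n / real ((2*n) choose n)"
  have ho: "harm (2*n+1) = O1 + harm n / (2::real)" unfolding O1_def by (rule HO)
  have h22: "harm (2*n+2) = harm (2*n+1) + 1 / (2*real n + 2 :: real)"
    using harm_Suc[of "2*n+1", where 'a=real] by (simp add: divide_inverse add.commute)
  have hn1: "harm (n+1) = harm n + 1 / (real n + 1 :: real)"
    using harm_Suc[of n, where 'a=real] by (simp add: divide_inverse add.commute)
  have xo: "X1 = (real n + 1) / 2 * (1 + O1)" unfolding X1_def O1_def by (rule Xodd)
  have xe: "X0 = c / 4 + (real n + 1) / 2 + (2*real n + 1) / 4 * O1"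
    unfolding X0_def O1_def c_def by (rule Xeven)
  have p1: "(\<Sum>j=0..n. \<Sum>i=0..j. real ((2*n+2) choose i) / real ((2*n+1) choose j)) = 2 * X1 - (real n + 1)"
    unfolding DS X1_def using S1[of n "2*n+1"] by simp
  have p2: "(\<Sum>j=0..n. \<Sum>i=0..j. real ((2*n+3) choose i) / real ((2*n+1) choose j))
      = 4 * X1 - 2 * (real n + 1) - (2 * real n + 2) * (harm (2*n+2) - harm (n+1))"
  proof -
    have "Suc (2*n+1) - Suc n = n + 1" by simp
    then show ?thesis unfolding DS X1_def using S2[of n "2*n+1"] by (simp add: eval_nat_numeral algebra_simps)
  qed
  have p3: "(\<Sum>j=0..n. \<Sum>i=0..j. real ((2*n+1) choose i) / real ((2*n) choose j)) = 2 * X0 - (real n + 1)"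
    unfolding DS X0_def using S1[of n "2*n"] by simp
  have p4: "(\<Sum>j=0..n. \<Sum>i=0..j. real ((2*n+2) choose i) / real ((2*n) choose j))
      = 4 * X0 - 2 * (real n + 1) - (2 * real n + 1) * (harm (2*n+1) - harm n)"
  proof -
    have "Suc (2*n) - Suc n = n" by simp
    then show ?thesis unfolding DS X0_def using S2[of n "2*n"] by (simp add: algebra_simps)
  qed
  have four: "(2::real)^(2*n) = 4^n" by (simp add: power_mult)
  have r1: "(\<Sum>j=0..n. \<Sum>i=0..j. real ((2*n+2) choose i) / real ((2*n+1) choose j))
           = real (n+1) * (\<Sum>k=0..n. 1 / real (2*k+1))"
    unfolding p1 xo using O1_def Od_def by (simp add: field_simps)
  have r2: "real (n+1) * (\<Sum>k=0..n. 1 / real (2*k+1)) = real (n+1) * (harm (2*n+1) - harm n / 2)"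
    using ho O1_def Od_def by simp
  have q: "(2*real n+2)*(harm(2*n+2) - harm(n+1)) = (2*real n+2)*O1 - (real n+1)*harm n - 1"
  proof -
    have a: "(2*real n+2)*(1/(2*real n+2)) = 1" by simp
    have b: "(2*real n+2)*(1/(real n+1)) = 2" by (simp add: field_simps)
    have d: "harm(2*n+2) - harm(n+1) = O1 - harm n/2 + 1/(2*real n+2) - 1/(real n+1)"
      using h22 hn1 ho by linarith
    show ?thesis unfolding d using a b by (simp add: algebra_simps)
  qed
  have r3: "(\<Sum>j=0..n. \<Sum>i=0..j. real ((2*n+3) choose i) / real ((2*n+1) choose j))
           = real (n+1) * harm (n+1)"
    unfolding p2 q xo using hn1 by (simp add: field_simps)
  have r4: "(\<Sum>j=0..n. \<Sum>i=0..j. real ((2*n+1) choose i) / real ((2*n) choose j))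
           = (2::real)^(2*n) / 2 / real ((2*n) choose n)
             + (real n + 1/2) * (harm (2*n+1) - harm n / 2)"
    unfolding p3 xe ho four using c_def by (simp add: field_simps)
  have r5: "(\<Sum>j=0..n. \<Sum>i=0..j. real ((2*n+2) choose i) / real ((2*n) choose j))
           = (2::real)^(2*n) / real ((2*n) choose n) + (real n + 1/2) * harm n"
    unfolding p4 xe ho four using c_def by (simp add: field_simps)
  show ?thesis using r1 r2 r3 r4 r5 by blast
qed

end
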